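(* Every Eulerian map is edge-wise Eulerian: if $X$ is a Peano continuum and $g:S^1\to X$ is a continuous surjection such that $g(A)\neq X$ for every closed $A\subsetneq S^1$, then $g^{-1}(x)$ is a singleton for every point $x$ lying in a free arc of $X$.
   Context: A Peano continuum is a compact, connected, locally connected metrizable space. A free arc of $X$ is an inclusion-maximal open subset of $X$ homeomorphic to $(0,1)$. *)

theory Defs
  imports "HOL-Analysis.Analysis"
begin

definition peano_continuum :: "'a topology \<Rightarrow> bool" where
  "peano_continuum X \<longleftrightarrow> compact_space X \<and> connected_space X \<and>
     locally_connected_space X \<and> metrizable_space X"

definition open_arc_in :: "'a topology \<Rightarrow> 'a set \<Rightarrow> bool" where
  "open_arc_in X U \<longleftrightarrow> openin X U \<and>
     (subtopology X U) homeomorphic_space (top_of_set {0<..<(1::real)})"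

definition free_arc :: "'a topology \<Rightarrow> 'a set \<Rightarrow> bool" where
  "free_arc X U \<longleftrightarrow> open_arc_in X U \<and> (\<forall>V. open_arc_in X V \<and> U \<subseteq> V \<longrightarrow> V = U)"

definition circle :: "complex set" where
  "circle = sphere 0 1"

end

theory Submission
  imports Defs
begin

definition EE :: "real \<Rightarrow> complex" where
  "EE \<theta> = exp (2 * of_real pi * \<i> * of_real \<theta>)"

lemma EE_circle: "EE \<theta> \<in> circle"
  by (simp add: EE_def circle_def norm_exp_eq_Re)

lemma EE_periodic: "EE (\<theta> + of_int k) = EE \<theta>"
  unfolding EE_def exp_eq by (rule exI[of _ k]) (simp add: algebra_simps)

lemma EE_inj: "EE u = EE w \<Longrightarrow> \<exists>n::int. u = w + of_int n"
proof -
  assume "EE u = EE w"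
  then obtain n::int where n: "2 * of_real pi * \<i> * of_real u = 2 * of_real pi * \<i> * of_real w + (of_int (2 * n) * pi) * \<i>"
    unfolding EE_def exp_eq by blast
  then have "\<i> * complex_of_real (2*pi*u) = \<i> * complex_of_real (2*pi*w + 2*n*pi)"
    by (simp add: algebra_simps)
  then have "complex_of_real (2*pi*u) = complex_of_real (2*pi*w + 2*n*pi)"
    by simp
  then have "2*pi*u = 2*pi*w + 2*n*pi" using of_real_eq_iff by blast
  then have "(2*pi)*u = (2*pi)*(w + n)" by (simp add: algebra_simps)
  then have "u = w + n" using pi_gt_zero by (metis mult_cancel_left mult_eq_0_iff pi_neq_zero zero_neq_numeral)
  then show ?thesis by blast
qed

lemma EE_surj: "z \<in> circle \<Longrightarrow> \<exists>\<theta>. EE \<theta> = z"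
proof -
  assume "z \<in> circle"
  then have z: "norm z = 1" "z \<noteq> 0" by (auto simp: circle_def)
  have "z = exp (\<i> * Arg z)" using Arg_eq[OF z(2)] z(1) by simp
  then have "EE (Arg z / (2*pi)) = z" by (simp add: EE_def mult.commute)
  then show ?thesis by blast
qed

lemma EE_cont: "continuous_map euclideanreal (top_of_set circle) EE"
  unfolding EE_def using EE_circle[unfolded EE_def]
  by (intro continuous_map_into_subtopology) (auto intro!: continuous_intros)

lemma IVT_between:
  fixes \<phi> :: "real \<Rightarrow> real"
  assumes "continuous_on {c..d} \<phi>" "c \<le> d" "min (\<phi> c) (\<phi> d) \<le> y" "y \<le> max (\<phi> c) (\<phi> d)"
  shows "\<exists>z. c \<le> z \<and> z \<le> d \<and> \<phi> z = y"
proof (cases "\<phi> c \<le> \<phi> d")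
  case True
  then show ?thesis using IVT'[of \<phi> c y d] assms by auto
next
  case False
  then show ?thesis using IVT2'[of \<phi> d y c] assms by auto
qed

theorem lemma2p1:
  fixes X :: "'a topology" and g :: "complex \<Rightarrow> 'a"
  assumes "peano_continuum X"
    and "continuous_map (top_of_set circle) X g"
    and "g ` circle = topspace X"
    and "\<And>A. closedin (top_of_set circle) A \<Longrightarrow> A \<subset> circle \<Longrightarrow> g ` A \<noteq> topspace X"
  shows "\<forall>x U. free_arc X U \<and> x \<in> U \<longrightarrow> (\<exists>!s. s \<in> circle \<and> g s = x)"
proof (intro allI impI, elim conjE)
  fix x U assume fa: "free_arc X U" and xU: "x \<in> U"
  define F where "F = g \<circ> EE"
  have Fc: "continuous_map euclideanreal X F"
    unfolding F_def using continuous_map_compose[OF EE_cont assms(2)] .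
  have Fper: "F (\<theta> + of_int k) = F \<theta>" for \<theta> k by (simp add: F_def EE_periodic)
  have Fper1: "F (\<theta> + 1) = F \<theta>" for \<theta> using Fper[of \<theta> 1] by simp
  have Ftop: "F \<theta> \<in> topspace X" for \<theta> using assms(3) EE_circle by (auto simp: F_def)
  have Fsurj: "\<exists>\<theta>. F \<theta> = y" if "y \<in> topspace X" for y
    using that assms(3) EE_surj unfolding F_def by (metis comp_apply imageE)
  have oU: "openin X U" and hom: "subtopology X U homeomorphic_space top_of_set {0<..<(1::real)}"
    using fa by (auto simp: free_arc_def open_arc_in_def)
  have UX: "U \<subseteq> topspace X" using oU openin_subset by auto
  have tsU: "topspace (subtopology X U) = U" using UX by auto
  obtain h hi where hm: "homeomorphic_maps (subtopology X U) (top_of_set {0<..<(1::real)}) h hi"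
    using hom homeomorphic_space_def by blast
  have hcont: "continuous_map (subtopology X U) (top_of_set {0<..<(1::real)}) h"
   and hicont: "continuous_map (top_of_set {0<..<(1::real)}) (subtopology X U) hi"
   and hih: "\<And>y. y \<in> U \<Longrightarrow> hi (h y) = y"
   and hhi: "\<And>c. c \<in> {0<..<1} \<Longrightarrow> h (hi c) = c"
    using hm tsU by (auto simp: homeomorphic_maps_def)
  have hU: "h y \<in> {0<..<1}" if "y \<in> U" for y
    using hcont that tsU by (auto simp: continuous_map_def Pi_iff)
  have hiU: "hi c \<in> U" if "c \<in> {0<..<1}" for c
    using hicont that tsU by (auto simp: continuous_map_def Pi_iff)
  have xX: "x \<in> topspace X" using xU UX by auto
  show "\<exists>!s. s \<in> circle \<and> g s = x"
  proof (rule ex_ex1I)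
    show "\<exists>s. s \<in> circle \<and> g s = x" using xX assms(3) by force
  next
    fix s t assume s: "s \<in> circle \<and> g s = x" and t: "t \<in> circle \<and> g t = x"
    show "s = t"
    proof (rule ccontr)
      assume st: "s \<noteq> t"
      define v where "v = h x"
      define a where "a = v/2"
      define b where "b = (1+v)/2"
      have v01: "0 < v" "v < 1" using hU[OF xU] v_def by auto
      have ab: "0 < a" "a < v" "v < b" "b < 1" using v01 unfolding a_def b_def by auto
      define V where "V = {y \<in> U. a < h y \<and> h y < b}"
      have VU: "V \<subseteq> U" unfolding V_def by auto
      have xV: "x \<in> V" using xU ab v_def V_def by auto
      have oV: "openin X V"
      proof -
        have "openin (top_of_set {0<..<(1::real)}) {a<..<b}"
          using ab by (intro open_subset) auto
        then have "openin (subtopology X U) {y \<in> topspace (subtopology X U). h y \<in> {a<..<b}}"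
          using openin_continuous_map_preimage[OF hcont] by blast
        moreover have "{y \<in> topspace (subtopology X U). h y \<in> {a<..<b}} = V"
          using UX unfolding V_def by auto
        ultimately have "openin (subtopology X U) V" by simp
        then show ?thesis using openin_trans_full oU by blast
      qed
      define K where "K = hi ` {a..b}"
      have Kc: "closedin X K"
      proof -
        have "compactin (top_of_set {0<..<(1::real)}) {a..b}"
          using ab by (auto simp add: compactin_subtopology)
        then have "compactin (subtopology X U) K" unfolding K_def using image_compactin hicont by blast
        then have "compactin X K" by (simp add: compactin_subtopology)
        moreover have "Hausdorff_space X"
          using assms(1) metrizable_imp_Hausdorff_space peano_continuum_def by blast
        ultimately show ?thesis using compactin_imp_closedin by blast
      qed
      have VK: "V \<subseteq> K"
      proof
        fix y assume "y \<in> V"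
        then have "y \<in> U" "h y \<in> {a..b}" unfolding V_def by auto
        then show "y \<in> K" unfolding K_def using hih by force
      qed
      have Kfact: "y \<in> U \<and> (h y = a \<or> h y = b)" if yK: "y \<in> K" and yV: "y \<notin> V" for y
      proof -
        obtain c where c: "c \<in> {a..b}" "y = hi c" using yK unfolding K_def by auto
        then have c01: "c \<in> {0<..<1}" using ab by auto
        then have yU: "y \<in> U" and hy: "h y = c" using c hiU hhi by auto
        have "\<not> (a < c \<and> c < b)" using yV yU hy unfolding V_def by auto
        then show ?thesis using c yU hy by auto
      qed
      have clK: "closed {u. F u \<in> K}"
      proof -
        have "closedin euclideanreal {u \<in> topspace euclideanreal. F u \<in> K}"
          using closedin_continuous_map_preimage[OF Fc Kc] .
        moreover have "{u \<in> topspace euclideanreal. F u \<in> K} = {u. F u \<in> K}" by simp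
        ultimately show ?thesis by (metis closed_closedin)
      qed
      have clNV: "closed {u. F u \<notin> V}"
      proof -
        have "closedin X (topspace X - V)" using oV by (simp add: closedin_diff)
        then have "closedin euclideanreal {u \<in> topspace euclideanreal. F u \<in> topspace X - V}"
          using closedin_continuous_map_preimage[OF Fc] by blast
        moreover have "{u \<in> topspace euclideanreal. F u \<in> topspace X - V} = {u. F u \<notin> V}"
          using Ftop by auto
        ultimately show ?thesis by (metis closed_closedin)
      qed
      have EL: False if el1: "\<alpha> < \<beta>" and el2: "\<beta> \<le> \<alpha> + 1"
        and el3: "\<And>u. \<alpha> < u \<Longrightarrow> u < \<beta> \<Longrightarrow> \<exists>u'. \<beta> \<le> u' \<and> u' \<le> \<alpha>+1 \<and> F u' = F u" for \<alpha> \<beta>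
      proof -
        define A where "A = EE ` {\<beta>..\<alpha>+1}"
        have cA: "compact A" unfolding A_def EE_def
          by (intro compact_continuous_image) (auto intro!: continuous_intros)
        have Acirc: "A \<subseteq> circle" using EE_circle A_def by auto
        have clA: "closedin (top_of_set circle) A" using closed_subset[OF Acirc compact_imp_closed[OF cA]] .
        define m where "m = (\<alpha>+\<beta>)/2"
        have "EE m \<notin> A"
        proof
          assume "EE m \<in> A"
          then obtain w where w: "w \<in> {\<beta>..\<alpha>+1}" "EE m = EE w" unfolding A_def by auto
          then obtain n::int where mn: "m = w + n" using EE_inj by blast
          have wb: "\<beta> \<le> w" "w \<le> \<alpha>+1" using w(1) by auto
          have mn2: "\<alpha> + \<beta> = 2*w + 2 * of_int n" using mn unfolding m_def by simp
          have n1: "(-1::real) < of_int n" using mn2 wb el1 el2 by linarith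
          have n2: "of_int n < (0::real)" using mn2 wb el1 el2 by linarith
          have "(-1::int) < n" using n1 by linarith
          moreover have "n < 0" using n2 by simp
          ultimately show False by linarith
        qed
        then have psub: "A \<subset> circle" using Acirc EE_circle by blast
        have "g ` A = topspace X"
        proof
          show "g ` A \<subseteq> topspace X" using Acirc assms(3) by blast
          show "topspace X \<subseteq> g ` A"
          proof
            fix y assume "y \<in> topspace X"
            then obtain \<theta> where th: "F \<theta> = y" using Fsurj by blast
            define \<theta>' where "\<theta>' = \<theta> + of_int \<lfloor>\<alpha> + 1 - \<theta>\<rfloor>"
            have fl: "of_int \<lfloor>\<alpha> + 1 - \<theta>\<rfloor> \<le> \<alpha> + 1 - \<theta>" "\<alpha> + 1 - \<theta> - 1 < of_int \<lfloor>\<alpha> + 1 - \<theta>\<rfloor>"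
              by (rule of_int_floor_le, rule real_of_int_floor_gt_diff_one)
            have th1: "\<alpha> < \<theta>' \<and> \<theta>' \<le> \<alpha> + 1" unfolding \<theta>'_def
              using fl by linarith
            have Fth: "F \<theta>' = y" using th Fper \<theta>'_def by simp
            obtain u' where "\<beta> \<le> u'" "u' \<le> \<alpha>+1" "F u' = y"
            proof (cases "\<beta> \<le> \<theta>'")
              case True then show ?thesis using that th1 Fth by blast
            next
              case False
              then obtain u' where "\<beta> \<le> u'" "u' \<le> \<alpha>+1" "F u' = F \<theta>'" using el3[of \<theta>'] th1 by auto
              then show ?thesis using that Fth by blast
            qed
            then show "y \<in> g ` A" unfolding A_def F_def by auto
          qed
        qed
        then show False using assms(4)[OF clA psub] by simp
      qed
      have CF: "continuous_on {c..d} (\<lambda>u. h (F u))" if cf: "\<And>u. c \<le> u \<Longrightarrow> u \<le> d \<Longrightarrow> F u \<in> U" for c d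
      proof -
        have "continuous_map (top_of_set {c..d}) X F" using Fc continuous_map_from_subtopology by blast
        then have "continuous_map (top_of_set {c..d}) (subtopology X U) F"
          using cf by (intro continuous_map_into_subtopology) auto
        then have "continuous_map (top_of_set {c..d}) (top_of_set {0<..<(1::real)}) (h \<circ> F)"
          using hcont continuous_map_compose by blast
        then have "continuous_map (top_of_set {c..d}) euclideanreal (h \<circ> F)"
          using continuous_map_in_subtopology by blast
        then show ?thesis by (simp add: o_def)
      qed
      have FeqI: "F u' = F u" if "F u \<in> U" "F u' \<in> U" "h (F u') = h (F u)" for u u'
        using that hih by metis
      have pU: "hi a \<in> U" and hp: "h (hi a) = a" using hiU hhi ab by auto
      have pV: "hi a \<notin> V" using hp unfolding V_def by auto
      have CL: "\<exists>l r. l < \<rho> \<and> \<rho> < r \<and> r \<le> l + 1 \<and> (\<forall>u. l < u \<and> u < r \<longrightarrow> F u \<in> V)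
          \<and> (\<forall>u. l \<le> u \<and> u \<le> r \<longrightarrow> F u \<in> U) \<and> F l \<notin> V \<and> F r \<notin> V
          \<and> (h (F l) = a \<or> h (F l) = b) \<and> (h (F r) = a \<or> h (F r) = b)"
        if rhoV: "F \<rho> \<in> V" for \<rho>
      proof -
        obtain \<theta> where th: "F \<theta> = hi a" using Fsurj pU UX by blast
        define \<omega> where "\<omega> = \<theta> + of_int \<lfloor>\<rho> - \<theta>\<rfloor>"
        have fl: "of_int \<lfloor>\<rho> - \<theta>\<rfloor> \<le> \<rho> - \<theta>" "\<rho> - \<theta> - 1 < of_int \<lfloor>\<rho> - \<theta>\<rfloor>"
          by (rule of_int_floor_le, rule real_of_int_floor_gt_diff_one)
        have om: "\<omega> \<le> \<rho>" "\<rho> < \<omega> + 1" unfolding \<omega>_def using fl by linarith+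
        have Fom: "F \<omega> \<notin> V" using th Fper pV \<omega>_def by simp
        have Fom1: "F (\<omega>+1) \<notin> V" using Fom Fper1 by simp
        define S1 where "S1 = {u. u \<le> \<rho> \<and> F u \<notin> V}"
        define S2 where "S2 = {u. \<rho> \<le> u \<and> F u \<notin> V}"
        have S1eq: "S1 = {..\<rho>} \<inter> {u. F u \<notin> V}" unfolding S1_def by auto
        have S2eq: "S2 = {\<rho>..} \<inter> {u. F u \<notin> V}" unfolding S2_def by auto
        have cS1: "closed S1" unfolding S1eq using clNV by (intro closed_Int) auto
        have cS2: "closed S2" unfolding S2eq using clNV by (intro closed_Int) auto
        have omS1: "\<omega> \<in> S1" using om Fom S1_def by auto
        have omS2: "\<omega>+1 \<in> S2" using om Fom1 S2_def by auto
        have bS1: "bdd_above S1" unfolding S1_def by (intro bdd_aboveI[of _ \<rho>]) auto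
        have bS2: "bdd_below S2" unfolding S2_def by (intro bdd_belowI[of _ \<rho>]) auto
        define l where "l = Sup S1"
        define r where "r = Inf S2"
        have lS1: "l \<in> S1" unfolding l_def using closed_contains_Sup[OF _ bS1 cS1] omS1 by blast
        have rS2: "r \<in> S2" unfolding r_def using closed_contains_Inf[OF _ bS2 cS2] omS2 by blast
        have oml: "\<omega> \<le> l" unfolding l_def using cSup_upper[OF omS1 bS1] .
        have omr: "r \<le> \<omega> + 1" unfolding r_def using cInf_lower[OF omS2 bS2] .
        have lr: "r \<le> l + 1" using oml omr by linarith
        have Fl: "F l \<notin> V" and Fr: "F r \<notin> V" using lS1 rS2 S1_def S2_def by auto
        have lrho: "l < \<rho>" using lS1 rhoV S1_def by (cases "l = \<rho>") auto
        have rrho: "\<rho> < r" using rS2 rhoV S2_def by (cases "r = \<rho>") auto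
        have inV: "F u \<in> V" if "l < u" "u < r" for u
        proof (rule ccontr)
          assume nV: "F u \<notin> V"
          show False
          proof (cases "u \<le> \<rho>")
            case True
            then have "u \<in> S1" using nV S1_def by auto
            then have "u \<le> l" unfolding l_def using cSup_upper[OF _ bS1] by blast
            then show False using that by linarith
          next
            case False
            then have "u \<in> S2" using nV S2_def by auto
            then have "r \<le> u" unfolding r_def using cInf_lower[OF _ bS2] by blast
            then show False using that by linarith
          qed
        qed
        have FlK: "F l \<in> K"
        proof -
          have "{l<..\<rho>} \<subseteq> {u. F u \<in> K}" using inV VK rrho by force
          then have "closure {l<..\<rho>} \<subseteq> {u. F u \<in> K}" using clK closure_minimal by blast
          moreover have "l \<in> closure {l<..\<rho>}" using closure_greaterThanAtMost[OF lrho] lrho by simp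
          ultimately show ?thesis by blast
        qed
        have FrK: "F r \<in> K"
        proof -
          have "{\<rho>..<r} \<subseteq> {u. F u \<in> K}" using inV VK lrho by force
          then have "closure {\<rho>..<r} \<subseteq> {u. F u \<in> K}" using clK closure_minimal by blast
          moreover have "r \<in> closure {\<rho>..<r}" using closure_atLeastLessThan[OF rrho] rrho by simp
          ultimately show ?thesis by blast
        qed
        have inU: "\<forall>u. l \<le> u \<and> u \<le> r \<longrightarrow> F u \<in> U"
        proof (intro allI impI)
          fix u assume u: "l \<le> u \<and> u \<le> r"
          show "F u \<in> U"
          proof (cases "u = l \<or> u = r")
            case True then show ?thesis using Kfact FlK FrK Fl Fr by auto
          next
            case False then show ?thesis using inV u VU by force
          qed
        qed
        show ?thesis
          using lrho rrho lr inV inU Fl Fr Kfact[OF FlK Fl] Kfact[OF FrK Fr] by blast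
      qed
      have XL: "h (F l) \<noteq> h (F r)"
        if x1: "l < \<rho>" and x2: "\<rho> < r" and x3: "r \<le> l + 1" and x4: "\<forall>u. l < u \<and> u < r \<longrightarrow> F u \<in> V"
          and x5: "\<forall>u. l \<le> u \<and> u \<le> r \<longrightarrow> F u \<in> U"
          and x6: "h (F l) = a \<or> h (F l) = b" and x7: "h (F r) = a \<or> h (F r) = b" for l r \<rho>
      proof
        assume eq: "h (F l) = h (F r)"
        have cont: "continuous_on {l..r} (\<lambda>u. h (F u))" using CF x5 by blast
        have vals: "a \<le> h (F u) \<and> h (F u) \<le> b" if "l \<le> u" "u \<le> r" for u
        proof (cases "u = l \<or> u = r")
          case True then show ?thesis using x6 x7 ab by auto
        next
          case False then have "F u \<in> V" using x4 that by auto
          then show ?thesis unfolding V_def by auto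
        qed
        have rhoab: "a < h (F \<rho>)" "h (F \<rho>) < b" using x4 x1 x2 unfolding V_def by auto
        have ne: "{l..r} \<noteq> {}" using x1 x2 by auto
        consider "h (F l) = a" | "h (F l) = b" using x6 by blast
        then show False
        proof cases
          case 1
          obtain \<mu> where mu: "\<mu> \<in> {l..r}" "\<forall>y\<in>{l..r}. h (F y) \<le> h (F \<mu>)"
            using continuous_attains_sup[OF compact_Icc ne cont] by blast
          have "h (F \<rho>) \<le> h (F \<mu>)" using mu x1 x2 by auto
          then have "\<mu> \<noteq> l" "\<mu> \<noteq> r" using 1 eq rhoab by auto
          then have lmr: "l < \<mu>" "\<mu> < r" using mu by auto
          show False
          proof (rule EL[of l \<mu>])
            show "l < \<mu>" "\<mu> \<le> l + 1" using lmr x3 by auto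
            fix u assume u: "l < u" "u < \<mu>"
            have c2: "continuous_on {\<mu>..r} (\<lambda>u. h (F u))" using CF x5 lmr by auto
            have "min (h (F \<mu>)) (h (F r)) \<le> h (F u)" "h (F u) \<le> max (h (F \<mu>)) (h (F r))"
              using vals[of u] mu u lmr 1 eq by auto
            then obtain z where z: "\<mu> \<le> z" "z \<le> r" "h (F z) = h (F u)"
              using IVT_between[OF c2] lmr by (metis less_imp_le)
            have "F z = F u" using FeqI[of u z] x5 z u lmr by auto
            then show "\<exists>u'. \<mu> \<le> u' \<and> u' \<le> l + 1 \<and> F u' = F u" using z x3 by (intro exI[of _ z]) auto
          qed
        next
          case 2
          obtain \<mu> where mu: "\<mu> \<in> {l..r}" "\<forall>y\<in>{l..r}. h (F \<mu>) \<le> h (F y)"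
            using continuous_attains_inf[OF compact_Icc ne cont] by blast
          have "h (F \<mu>) \<le> h (F \<rho>)" using mu x1 x2 by auto
          then have "\<mu> \<noteq> l" "\<mu> \<noteq> r" using 2 eq rhoab by auto
          then have lmr: "l < \<mu>" "\<mu> < r" using mu by auto
          show False
          proof (rule EL[of l \<mu>])
            show "l < \<mu>" "\<mu> \<le> l + 1" using lmr x3 by auto
            fix u assume u: "l < u" "u < \<mu>"
            have c2: "continuous_on {\<mu>..r} (\<lambda>u. h (F u))" using CF x5 lmr by auto
            have "min (h (F \<mu>)) (h (F r)) \<le> h (F u)" "h (F u) \<le> max (h (F \<mu>)) (h (F r))"
              using vals[of u] mu u lmr 2 eq by auto
            then obtain z where z: "\<mu> \<le> z" "z \<le> r" "h (F z) = h (F u)"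
              using IVT_between[OF c2] lmr by (metis less_imp_le)
            have "F z = F u" using FeqI[of u z] x5 z u lmr by auto
            then show "\<exists>u'. \<mu> \<le> u' \<and> u' \<le> l + 1 \<and> F u' = F u" using z x3 by (intro exI[of _ z]) auto
          qed
        qed
      qed
      obtain \<sigma> where sg: "EE \<sigma> = s" using EE_surj s by blast
      obtain \<tau> where tg: "EE \<tau> = t" using EE_surj t by blast
      have Fs: "F \<sigma> = x" using sg s F_def by auto
      have Ft: "F \<tau> = x" using tg t F_def by auto
      obtain l r where C1: "l < \<sigma>" and C2: "\<sigma> < r" and C3: "r \<le> l + 1"
          and C4: "\<forall>u. l < u \<and> u < r \<longrightarrow> F u \<in> V" and C5: "\<forall>u. l \<le> u \<and> u \<le> r \<longrightarrow> F u \<in> U"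
          and C6: "F l \<notin> V" and C7: "F r \<notin> V"
          and C8: "h (F l) = a \<or> h (F l) = b" and C9: "h (F r) = a \<or> h (F r) = b"
        using CL[of \<sigma>] Fs xV by blast
      have lrne: "h (F l) \<noteq> h (F r)" using XL[OF C1 C2 C3 C4 C5 C8 C9] .
      define \<tau>' where "\<tau>' = \<tau> + of_int \<lfloor>l + 1 - \<tau>\<rfloor>"
      have fl: "of_int \<lfloor>l + 1 - \<tau>\<rfloor> \<le> l + 1 - \<tau>" "l + 1 - \<tau> - 1 < of_int \<lfloor>l + 1 - \<tau>\<rfloor>"
        by (rule of_int_floor_le, rule real_of_int_floor_gt_diff_one)
      have t1: "l < \<tau>'" unfolding \<tau>'_def using fl by linarith
      have t2: "\<tau>' \<le> l + 1" unfolding \<tau>'_def using fl by linarith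
      have Ft': "F \<tau>' = x" using Ft Fper \<tau>'_def by simp
      have Fl1: "F (l + 1) \<notin> V" using C6 Fper1 by simp
      have t3: "\<tau>' < l + 1" using t2 Ft' xV Fl1 by (cases "\<tau>' = l + 1") auto
      have "EE \<tau>' = t" using tg EE_periodic \<tau>'_def by simp
      then have t4: "\<tau>' \<noteq> \<sigma>" using sg st by auto
      have hx: "h x = v" using v_def by simp
      have phV: "a < h (F u) \<and> h (F u) < b" if "l < u" "u < r" for u
        using C4 that unfolding V_def by auto
      show False
      proof (cases "\<tau>' < r")
        case True
        define \<alpha> where "\<alpha> = min \<sigma> \<tau>'"
        define \<beta> where "\<beta> = max \<sigma> \<tau>'"
        have ab1: "\<alpha> < \<beta>" "l < \<alpha>" "\<beta> < r" using t4 t1 C1 C2 True unfolding \<alpha>_def \<beta>_def by auto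
        have ab2: "h (F \<alpha>) = v" "h (F \<beta>) = v" using Fs Ft' hx unfolding \<alpha>_def \<beta>_def by (auto simp: min_def max_def)
        show False
        proof (rule EL[of \<alpha> \<beta>])
          show "\<alpha> < \<beta>" "\<beta> \<le> \<alpha> + 1" using ab1 C3 by auto
          fix u assume u: "\<alpha> < u" "u < \<beta>"
          have uV: "a < h (F u) \<and> h (F u) < b" using phV u ab1 by auto
          have uU: "F u \<in> U" using C5 u ab1 by auto
          have "(min (h (F l)) v \<le> h (F u) \<and> h (F u) \<le> max (h (F l)) v)
              \<or> (min v (h (F r)) \<le> h (F u) \<and> h (F u) \<le> max v (h (F r)))"
            using C8 C9 lrne uV ab by (cases "h (F l) = a") (auto simp: min_def max_def)
          then show "\<exists>u'. \<beta> \<le> u' \<and> u' \<le> \<alpha> + 1 \<and> F u' = F u"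
          proof
            assume lo: "min (h (F l)) v \<le> h (F u) \<and> h (F u) \<le> max (h (F l)) v"
            have c2: "continuous_on {l..\<alpha>} (\<lambda>u. h (F u))" using CF C5 ab1 by auto
            obtain z where z: "l \<le> z" "z \<le> \<alpha>" "h (F z) = h (F u)"
              using IVT_between[OF c2, of "h (F u)"] lo ab1 ab2 by auto
            have "F z = F u" using FeqI[of u z] uU C5 z ab1 by auto
            then have "F (z + 1) = F u" using Fper1 by simp
            then show ?thesis using z ab1 C3 by (intro exI[of _ "z + 1"]) auto
          next
            assume hi: "min v (h (F r)) \<le> h (F u) \<and> h (F u) \<le> max v (h (F r))"
            have c2: "continuous_on {\<beta>..r} (\<lambda>u. h (F u))" using CF C5 ab1 by auto
            obtain z where z: "\<beta> \<le> z" "z \<le> r" "h (F z) = h (F u)"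
              using IVT_between[OF c2, of "h (F u)"] hi ab1 ab2 by auto
            have "F z = F u" using FeqI[of u z] uU C5 z ab1 by auto
            then show ?thesis using z ab1 C3 by (intro exI[of _ z]) auto
          qed
        qed
      next
        case False
        have t5: "r < \<tau>'" using False C7 Ft' xV by (cases "\<tau>' = r") auto
        obtain l' r' where D1: "l' < \<tau>'" and D2: "\<tau>' < r'" and D3: "r' \<le> l' + 1"
            and D4: "\<forall>u. l' < u \<and> u < r' \<longrightarrow> F u \<in> V" and D5: "\<forall>u. l' \<le> u \<and> u \<le> r' \<longrightarrow> F u \<in> U"
            and D8: "h (F l') = a \<or> h (F l') = b" and D9: "h (F r') = a \<or> h (F r') = b"
          using CL[of \<tau>'] Ft' xV by blast
        have lrne': "h (F l') \<noteq> h (F r')" using XL[OF D1 D2 D3 D4 D5 D8 D9] .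
        have rl': "r \<le> l'"
        proof (rule ccontr)
          assume "\<not> r \<le> l'"
          then have "F r \<in> V" using D4 t5 D2 by auto
          then show False using C7 by simp
        qed
        have r'l: "r' \<le> l + 1"
        proof (rule ccontr)
          assume "\<not> r' \<le> l + 1"
          then have "F (l + 1) \<in> V" using D4 t3 D1 by auto
          then show False using Fl1 by simp
        qed
        show False
        proof (rule EL[of l r])
          show "l < r" "r \<le> l + 1" using C1 C2 C3 by auto
          fix u assume u: "l < u" "u < r"
          have uV: "a < h (F u) \<and> h (F u) < b" using phV u by auto
          have uU: "F u \<in> U" using C5 u by auto
          have c2: "continuous_on {l'..r'} (\<lambda>u. h (F u))" using CF D5 by auto
          have mm: "min (h (F l')) (h (F r')) \<le> h (F u) \<and> h (F u) \<le> max (h (F l')) (h (F r'))"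
            using D8 D9 lrne' uV by (cases "h (F l') = a") (auto simp: min_def max_def)
          obtain z where z: "l' \<le> z" "z \<le> r'" "h (F z) = h (F u)"
            using IVT_between[OF c2, of "h (F u)"] mm D1 D2 by auto
          have "F z = F u" using FeqI[of u z] uU D5 z by auto
          then show "\<exists>u'. r \<le> u' \<and> u' \<le> l + 1 \<and> F u' = F u" using z rl' r'l by (intro exI[of _ z]) auto
        qed
      qed
    qed
  qed
qed

end
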